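(* Let $|z|<1$. For $l=1,2,3,4$, \[ |V_l(z)|\le \sum_{j=1}^{l} C_{V,l,j}\frac{|\log(1-|z|)|^j}{j!}, \] with $C_{V,1,1}=2$; $C_{V,2,1} = |\lambda/2-2|$, $C_{V,2,2}=4$; $C_{V,3,1} = |\lambda^2/16-\lambda+2|$, $C_{V,3,2} = |3\lambda-12|+|\lambda-4|$, $C_{V,3,3}=8$; $C_{V,4,1} = |\lambda^3/192-\lambda^2/8-\lambda/2-2|+|2\lambda\zeta(3)|$, $C_{V,4,2} = |\lambda^2/8-2\lambda+4|+|\lambda^2/4-4\lambda+12|+|5\lambda^2/8-8\lambda+28|$, $C_{V,4,3} = |2\lambda-8|+|6\lambda-24|+|14\lambda-56|$, $C_{V,4,4}=16$. Moreover, if $|z|\le a<1$ (with $a>0$), then $|V_l(z)|\le D_{l,a}|z|$, where \[ D_{l,a} = \sum_{j=1}^{l} C_{V,l,j}\frac{|\log(1-a)|^j}{a\cdot j!}. \]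
   Context: Let $\lambda = j_{0,1}^2$ ($j_{0,1}$ the first positive zero of $J_0$) and $\zeta$ the Riemann zeta function. For positive integers $m_1,\dots,m_k$ and $|z|<1$, $\mathrm{Li}_{m_1,\dots,m_k}(z) = \sum_{0<n_1<\dots<n_k}\frac{z^{n_k}}{n_1^{m_1}\cdots n_k^{m_k}}$. Define $V_1 = 2\mathrm{Li}_1$, $V_2 = (\frac{\lambda}{2}-2)\mathrm{Li}_2+4\mathrm{Li}_{1,1}$, $V_3 = (\frac{\lambda^2}{16}-\lambda+2)\mathrm{Li}_3+(3\lambda-12)\mathrm{Li}_{1,2}+(\lambda-4)\mathrm{Li}_{2,1}+8\mathrm{Li}_{1,1,1}$, $V_4 = (\frac{\lambda^3}{192}-\frac{\lambda^2}{8}-\frac{\lambda}{2}-2)\mathrm{Li}_4+(\frac{\lambda^2}{8}-2\lambda+4)\mathrm{Li}_{3,1}+(\frac{\lambda^2}{4}-4\lambda+12)\mathrm{Li}_{2,2}+(\frac{5\lambda^2}{8}-8\lambda+28)\mathrm{Li}_{1,3}+(2\lambda-8)\mathrm{Li}_{2,1,1}+(6\lambda-24)\mathrm{Li}_{1,2,1}+(14\lambda-56)\mathrm{Li}_{1,1,2}+16\mathrm{Li}_{1,1,1,1}+2\lambda\zeta(3)\mathrm{Li}_1$. *)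

theory Defs
  imports "HOL-Analysis.Analysis"
begin

definition J0 :: "real \<Rightarrow> real" where
  "J0 x = (\<Sum>k. (-1)^k * (x/2)^(2*k) / (fact k)^2)"

definition j01 :: real where
  "j01 = Inf {x. 0 < x \<and> J0 x = 0}"

definition lam :: real where
  "lam = j01^2"

definition zeta3 :: real where
  "zeta3 = (\<Sum>n. 1 / (real (Suc n))^3)"

text \<open>Multiple polylogarithm Li_{m_1,...,m_k}(z) = sum over 0<n_1<...<n_k of
  z^{n_k} / (n_1^{m_1} ... n_k^{m_k}), grouped by the value n = n_k.\<close>
definition mpl_coef :: "nat list \<Rightarrow> nat \<Rightarrow> real" where
  "mpl_coef ms n = (\<Sum>ns \<in> {ns. length ns = length ms \<and> sorted_wrt (<) ns \<and> 0 \<notin> set ns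
                                  \<and> ns \<noteq> [] \<and> last ns = n}.
                      \<Prod>i<length ms. 1 / (real (ns ! i))^(ms ! i))"

definition Li :: "nat list \<Rightarrow> complex \<Rightarrow> complex" where
  "Li ms z = (\<Sum>n. of_real (mpl_coef ms n) * z^n)"

definition V :: "nat \<Rightarrow> complex \<Rightarrow> complex" where
  "V l z = (if l = 1 then 2 * Li [1] z
    else if l = 2 then of_real (lam/2 - 2) * Li [2] z + 4 * Li [1,1] z
    else if l = 3 then of_real (lam^2/16 - lam + 2) * Li [3] z + of_real (3*lam - 12) * Li [1,2] z
                     + of_real (lam - 4) * Li [2,1] z + 8 * Li [1,1,1] z
    else if l = 4 then of_real (lam^3/192 - lam^2/8 - lam/2 - 2) * Li [4] z
                     + of_real (lam^2/8 - 2*lam + 4) * Li [3,1] z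
                     + of_real (lam^2/4 - 4*lam + 12) * Li [2,2] z
                     + of_real (5*lam^2/8 - 8*lam + 28) * Li [1,3] z
                     + of_real (2*lam - 8) * Li [2,1,1] z
                     + of_real (6*lam - 24) * Li [1,2,1] z
                     + of_real (14*lam - 56) * Li [1,1,2] z
                     + 16 * Li [1,1,1,1] z
                     + of_real (2*lam*zeta3) * Li [1] z
    else 0)"

definition CV :: "nat \<Rightarrow> nat \<Rightarrow> real" where
  "CV l j = (if l = 1 \<and> j = 1 then 2
    else if l = 2 \<and> j = 1 then \<bar>lam/2 - 2\<bar>
    else if l = 2 \<and> j = 2 then 4
    else if l = 3 \<and> j = 1 then \<bar>lam^2/16 - lam + 2\<bar>
    else if l = 3 \<and> j = 2 then \<bar>3*lam - 12\<bar> + \<bar>lam - 4\<bar>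
    else if l = 3 \<and> j = 3 then 8
    else if l = 4 \<and> j = 1 then \<bar>lam^3/192 - lam^2/8 - lam/2 - 2\<bar> + \<bar>2*lam*zeta3\<bar>
    else if l = 4 \<and> j = 2 then \<bar>lam^2/8 - 2*lam + 4\<bar> + \<bar>lam^2/4 - 4*lam + 12\<bar>
                               + \<bar>5*lam^2/8 - 8*lam + 28\<bar>
    else if l = 4 \<and> j = 3 then \<bar>2*lam - 8\<bar> + \<bar>6*lam - 24\<bar> + \<bar>14*lam - 56\<bar>
    else if l = 4 \<and> j = 4 then 16
    else 0)"

definition D :: "nat \<Rightarrow> real \<Rightarrow> real" where
  "D l a = (\<Sum>j=1..l. CV l j * \<bar>ln (1 - a)\<bar>^j / (a * fact j))"

end

theory Submission
  imports Defs
begin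


abbreviation SS :: "nat list \<Rightarrow> nat \<Rightarrow> nat list set" where
  "SS ms n \<equiv> {ns. length ns = length ms \<and> sorted_wrt (<) ns \<and> 0 \<notin> set ns
                                  \<and> ns \<noteq> [] \<and> last ns = n}"

lemma mpl_coef_nonneg: "0 \<le> mpl_coef ms n"
  unfolding mpl_coef_def by (intro sum_nonneg prod_nonneg) auto

lemma sorted_le_last:
  fixes ns :: "nat list"
  assumes "sorted_wrt (<) ns" "ns \<noteq> []" "x \<in> set ns" shows "x \<le> last ns"
proof -
  have "ns = butlast ns @ [last ns]" using assms(2) by simp
  then have "sorted_wrt (<) (butlast ns @ [last ns])" using assms(1) by simp
  then have "\<forall>y\<in>set (butlast ns). y < last ns" by (simp add: sorted_wrt_append)
  moreover have "x \<in> set (butlast ns) \<or> x = last ns"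
    using assms(3) \<open>ns = _\<close> by (metis rotate1.simps(2) set_ConsD set_rotate1)
  ultimately show ?thesis by auto
qed

lemma finite_SS: "finite (SS ms n)"
proof (rule finite_subset)
  show "SS ms n \<subseteq> {ns. set ns \<subseteq> {..n} \<and> length ns = length ms}"
    using sorted_le_last by fastforce
  show "finite {ns. set ns \<subseteq> {..n} \<and> length ns = length ms}"
    by (rule finite_lists_length_eq) auto
qed

lemma mpl_coef_single: "mpl_coef [m] n = (if n = 0 then 0 else 1 / real n ^ m)"
proof -
  have e: "SS [m] n = (if n = 0 then {} else {[n]})"
    by (auto simp: length_Suc_conv)
  show ?thesis
  proof (cases "n = 0")
    case True
    then have "SS [m] n = {}" using e by simp
    then show ?thesis using True unfolding mpl_coef_def by (simp only: sum.empty) simp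
  next
    case False
    then have "SS [m] n = {[n]}" using e by simp
    then show ?thesis using False unfolding mpl_coef_def by simp
  qed
qed

lemma SS_snoc:
  assumes "ms \<noteq> []" "n > 0"
  shows "SS (ms @ [m]) n = (\<lambda>ns. ns @ [n]) ` (\<Union>j<n. SS ms j)"
proof (intro set_eqI iffI)
  fix ns assume ns: "ns \<in> SS (ms @ [m]) n"
  let ?b = "butlast ns"
  have nsne: "ns \<noteq> []" and lastn: "last ns = n" and sw0: "sorted_wrt (<) ns"
    and z0: "0 \<notin> set ns" and len: "length ns = Suc (length ms)" using ns by auto
  have nsb: "ns = ?b @ [n]" using nsne lastn by (metis append_butlast_last_id)
  have lb: "length ?b = length ms" using len by simp
  then have bne: "?b \<noteq> []" using assms by (metis length_0_conv)
  have sw: "sorted_wrt (<) (?b @ [n])" using sw0 nsb by metis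
  then have swb: "sorted_wrt (<) ?b" and lt: "\<forall>y\<in>set ?b. y < n"
    by (simp_all add: sorted_wrt_append)
  have "0 \<notin> set ?b" using z0 by (meson in_set_butlastD)
  then have m1: "?b \<in> SS ms (last ?b)" using lb swb bne by simp
  have m2: "last ?b < n" using lt bne by simp
  have "?b \<in> (\<Union>j<n. SS ms j)" by (rule UN_I[of "last ?b"]) (simp add: m2, rule m1)
  then have "?b @ [n] \<in> (\<lambda>ns. ns @ [n]) ` (\<Union>j<n. SS ms j)" by (rule imageI)
  then show "ns \<in> (\<lambda>ns. ns @ [n]) ` (\<Union>j<n. SS ms j)" by (simp only: nsb[symmetric])
next
  fix ns assume "ns \<in> (\<lambda>ns. ns @ [n]) ` (\<Union>j<n. SS ms j)"
  then obtain bs j where bs: "ns = bs @ [n]" "j < n" "bs \<in> SS ms j" by blast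
  have le: "\<forall>x\<in>set bs. x \<le> j" using bs(3) sorted_le_last by blast
  then have lt: "\<forall>x\<in>set bs. x < n" using bs(2) by force
  have "sorted_wrt (<) (bs @ [n])" using lt bs(3) by (simp add: sorted_wrt_append)
  moreover have "0 \<notin> set (bs @ [n])" using bs(3) assms(2) by auto
  moreover have "length (bs @ [n]) = length (ms @ [m])" using bs(3) by simp
  ultimately show "ns \<in> SS (ms @ [m]) n" using bs(1) by simp
qed

lemma prod_snoc:
  assumes "length bs = length ms"
  shows "(\<Prod>i<length (ms @ [m]). 1 / real ((bs @ [n]) ! i) ^ ((ms @ [m]) ! i))
     = (\<Prod>i<length ms. 1 / real (bs ! i) ^ (ms ! i)) * (1 / real n ^ m)"
  using assms by (simp add: prod.lessThan_Suc nth_append)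

lemma mpl_coef_snoc:
  assumes "ms \<noteq> []"
  shows "mpl_coef (ms @ [m]) n = (if n = 0 then 0 else (1 / real n ^ m) * (\<Sum>j<n. mpl_coef ms j))"
proof (cases "n = 0")
  case True
  then have e: "SS (ms @ [m]) n = {}" by (auto simp: last_in_set) (metis last_in_set)
  have "mpl_coef (ms @ [m]) n = 0" unfolding mpl_coef_def e by (rule sum.empty)
  then show ?thesis using True by simp
next
  case False
  have inj: "inj_on (\<lambda>ns. ns @ [n]) X" for X by (auto simp: inj_on_def)
  have SSe: "SS (ms @ [m]) n = (\<lambda>ns. ns @ [n]) ` (\<Union>j<n. SS ms j)"
    by (rule SS_snoc) (use False assms in auto)
  have "mpl_coef (ms @ [m]) n = (\<Sum>ns\<in>(\<Union>j<n. SS ms j). (\<Prod>i<length ms. 1 / real (ns ! i) ^ (ms ! i)) * (1 / real n ^ m))"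
    unfolding mpl_coef_def SSe
    apply (subst sum.reindex[OF inj])
    apply (intro sum.cong refl)
    apply (simp only: o_def)
    apply (rule prod_snoc)
    apply auto
    done
  also have "\<dots> = (\<Sum>j<n. \<Sum>ns\<in>SS ms j. (\<Prod>i<length ms. 1 / real (ns ! i) ^ (ms ! i)) * (1 / real n ^ m))"
    by (rule sum.UNION_disjoint) (auto simp: finite_SS)
  also have "\<dots> = (1 / real n ^ m) * (\<Sum>j<n. mpl_coef ms j)"
    unfolding mpl_coef_def by (simp add: sum_distrib_left sum_distrib_right mult.commute)
  finally show ?thesis using False by simp
qed

fun cc :: "nat \<Rightarrow> nat \<Rightarrow> real" where
  "cc 0 n = (if n = 0 then 1 else 0)"
| "cc (Suc k) n = (if n = 0 then 0 else (\<Sum>j<n. cc k j) / real n)"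

lemma cc_nonneg: "0 \<le> cc k n"
  by (induction k arbitrary: n) (auto intro!: sum_nonneg divide_nonneg_nonneg)

lemma cc_one: "n > 0 \<Longrightarrow> cc 1 n = 1 / real n"
proof -
  assume "n > 0"
  have "(\<Sum>j<n. cc 0 j) = (\<Sum>j\<in>{0}. cc 0 j)"
    by (rule sum.mono_neutral_right) (use \<open>n>0\<close> in auto)
  then show ?thesis using \<open>n>0\<close> by simp
qed

lemma mpl_le_cc:
  assumes "ms \<noteq> []" "\<forall>m\<in>set ms. 1 \<le> m"
  shows "mpl_coef ms n \<le> cc (length ms) n"
  using assms
proof (induction ms arbitrary: n rule: rev_induct)
  case Nil then show ?case by simp
next
  case (snoc m xs)
  have pw: "1 / real n ^ m \<le> 1 / real n" if "n > 0"
  proof -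
    have "real n ^ 1 \<le> real n ^ m" using that snoc.prems by (intro power_increasing) auto
    then show ?thesis using that by (intro divide_left_mono) auto
  qed
  show ?case
  proof (cases "xs = []")
    case True
    then show ?thesis using pw by (simp add: mpl_coef_single cc_one)
  next
    case False
    show ?thesis
    proof (cases "n = 0")
      case True then show ?thesis using False by (simp add: mpl_coef_snoc)
    next
      case n: False
      have "mpl_coef (xs @ [m]) n = (1 / real n ^ m) * (\<Sum>j<n. mpl_coef xs j)"
        using False n by (simp add: mpl_coef_snoc)
      also have "\<dots> \<le> (1 / real n) * (\<Sum>j<n. cc (length xs) j)"
        using snoc.IH[OF False] snoc.prems pw n
        by (intro mult_mono sum_mono) (auto intro!: sum_nonneg mpl_coef_nonneg)
      also have "\<dots> = cc (length (xs @ [m])) n" using n by simp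
      finally show ?thesis .
    qed
  qed
qed



lemma geom_bound:
  fixes t :: real
  assumes "0 \<le> t" "t < 1"
  shows "(\<Sum>n=Suc j..N. t^(n-1)) \<le> t^j / (1 - t)"
proof -
  have eq: "(1 - t) * (\<Sum>n=Suc j..N. t^(n-1)) = (if j < N then t^j - t^N else 0)" for N
  proof (induction N)
    case 0 then show ?case by simp
  next
    case (Suc N)
    show ?case
    proof (cases "j < N")
      case True
      then have "{Suc j..Suc N} = insert (Suc N) {Suc j..N}" by (intro atLeastAtMostSuc_conv) auto
      then have "(\<Sum>n=Suc j..Suc N. t^(n-1)) = t^N + (\<Sum>n=Suc j..N. t^(n-1))" by simp
      then have "(1 - t) * (\<Sum>n=Suc j..Suc N. t^(n-1)) = (1 - t) * t^N + (1 - t) * (\<Sum>n=Suc j..N. t^(n-1))"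
        by (simp only: distrib_left)
      also have "\<dots> = (1 - t) * t^N + (t^j - t^N)" using Suc.IH True by simp
      also have "\<dots> = t^j - t^Suc N" by (simp add: algebra_simps)
      finally show ?thesis using True by simp
    next
      case False
      show ?thesis
      proof (cases "j = N")
        case True
        then show ?thesis by (simp add: algebra_simps)
      next
        case False
        then have "{Suc j..Suc N} = {}" using \<open>\<not> j < N\<close> by auto
        then show ?thesis using False \<open>\<not> j < N\<close> by simp
      qed
    qed
  qed
  have "(1 - t) * (\<Sum>n=Suc j..N. t^(n-1)) \<le> t^j" using eq[of N] assms by auto
  then show ?thesis using assms by (simp add: field_simps)
qed

lemma deriv_P_le:
  fixes t :: real
  assumes "0 \<le> t" "t < 1"
  shows "(\<Sum>n\<le>N. cc (Suc k) n * (real n * t^(n-1))) \<le> (\<Sum>n\<le>N. cc k n * t^n) / (1 - t)"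
proof -
  have "(\<Sum>n\<le>N. cc (Suc k) n * (real n * t^(n-1))) = (\<Sum>n\<le>N. \<Sum>j<n. cc k j * t^(n-1))"
  proof (intro sum.cong refl)
    fix n assume "n \<in> {..N}"
    show "cc (Suc k) n * (real n * t^(n-1)) = (\<Sum>j<n. cc k j * t^(n-1))"
    proof (cases "n = 0")
      case True then show ?thesis by simp
    next
      case False
      have h: "cc (Suc k) n * real n = (\<Sum>j<n. cc k j)" using False by simp
      have "cc (Suc k) n * (real n * t^(n-1)) = (cc (Suc k) n * real n) * t^(n-1)" by (simp only: mult.assoc)
      also have "\<dots> = (\<Sum>j<n. cc k j) * t^(n-1)" by (simp only: h)
      also have "\<dots> = (\<Sum>j<n. cc k j * t^(n-1))" by (rule sum_distrib_right)
      finally show ?thesis .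
    qed
  qed
  also have "\<dots> = (\<Sum>j<N. \<Sum>n=Suc j..N. cc k j * t^(n-1))"
    by (rule sum.nested_swap')
  also have "\<dots> = (\<Sum>j<N. cc k j * (\<Sum>n=Suc j..N. t^(n-1)))"
    by (simp add: sum_distrib_left)
  also have "\<dots> \<le> (\<Sum>j<N. cc k j * (t^j / (1 - t)))"
    by (intro sum_mono mult_left_mono geom_bound assms cc_nonneg)
  also have "\<dots> \<le> (\<Sum>j\<le>N. cc k j * (t^j / (1 - t)))"
    using assms by (intro sum_mono2) (auto intro!: mult_nonneg_nonneg divide_nonneg_nonneg cc_nonneg)
  also have "\<dots> = (\<Sum>n\<le>N. cc k n * t^n) / (1 - t)"
    by (simp add: sum_divide_distrib)
  finally show ?thesis .
qed

lemma P_le: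
  fixes x :: real
  assumes "0 \<le> x" "x < 1"
  shows "(\<Sum>n\<le>N. cc k n * x^n) \<le> (- ln (1 - x))^k / fact k"
  using assms
proof (induction k arbitrary: x)
  case 0
  have "(\<Sum>n\<le>N. cc 0 n * x^n) = (\<Sum>n\<in>{0}. cc 0 n * x^n)"
    by (rule sum.mono_neutral_right) auto
  then show ?case by simp
next
  case (Suc k)
  define f where "f = (\<lambda>t::real. (- ln (1 - t))^(Suc k) / fact (Suc k) - (\<Sum>n\<le>N. cc (Suc k) n * t^n))"
  have f0: "f 0 = 0"
  proof -
    have "(\<Sum>n\<le>N. cc (Suc k) n * 0^n) = 0"
      by (intro sum.neutral) (auto simp: power_0_left)
    then show ?thesis unfolding f_def by simp
  qed
  have der: "(f has_real_derivative ((- ln (1 - t))^k / fact k * (1 / (1 - t))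
              - (\<Sum>n\<le>N. cc (Suc k) n * (real n * t^(n-1))))) (at t)" if "t < 1" for t
  proof -
    have d1: "((\<lambda>t. (- ln (1 - t))^(Suc k) / fact (Suc k)) has_real_derivative
        ((- ln (1 - t))^k / fact k * (1 / (1 - t)))) (at t)"
    proof -
      have u: "((\<lambda>t. - ln (1 - t)) has_real_derivative 1 / (1 - t)) (at t)"
        using that by (auto intro!: derivative_eq_intros)
      have dd: "((\<lambda>t. (- ln (1 - t))^(Suc k) / fact (Suc k)) has_real_derivative
        (of_nat (Suc k) * (1 / (1 - t) * (- ln (1 - t)) ^ (Suc k - Suc 0))) / fact (Suc k)) (at t)"
        by (intro DERIV_cdivide DERIV_power u)
      have ee: "(of_nat (Suc k) * (1 / (1 - t) * (- ln (1 - t)) ^ (Suc k - Suc 0))) / fact (Suc k)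
          = (- ln (1 - t))^k / fact k * (1 / (1 - t))"
        using that by (simp add: fact_Suc field_simps del: of_nat_Suc)
      show ?thesis using dd unfolding ee .
    qed
    have d2: "((\<lambda>t. \<Sum>n\<le>N. cc (Suc k) n * t^n) has_real_derivative
        (\<Sum>n\<le>N. cc (Suc k) n * (real n * t^(n-1)))) (at t)"
      by (auto intro!: derivative_eq_intros sum.cong simp del: cc.simps)
    show ?thesis unfolding f_def by (rule DERIV_diff[OF d1 d2])
  qed
  have "f 0 \<le> f x"
  proof (rule DERIV_nonneg_imp_increasing_open[of 0 x f])
    show "0 \<le> x" using Suc.prems by simp
    fix t assume t: "0 < t" "t < x"
    then have t1: "t < 1" using Suc.prems by simp
    have "(\<Sum>n\<le>N. cc (Suc k) n * (real n * t^(n-1))) \<le> (\<Sum>n\<le>N. cc k n * t^n) / (1 - t)"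
      using t t1 by (intro deriv_P_le) auto
    also have "\<dots> \<le> (- ln (1 - t))^k / fact k * (1 / (1 - t))"
    proof -
      have "(\<Sum>n\<le>N. cc k n * t^n) / (1 - t) \<le> ((- ln (1 - t))^k / fact k) / (1 - t)"
        using Suc.IH[of t] t t1 by (intro divide_right_mono) auto
      then show ?thesis by simp
    qed
    finally show "\<exists>y. (f has_real_derivative y) (at t) \<and> 0 \<le> y"
      using der[OF t1] by auto
  next
    have "\<forall>t\<in>{0..x}. isCont f t"
    proof
      fix t assume "t \<in> {0..x}"
      then have "t < 1" using Suc.prems by simp
      from der[OF this] show "isCont f t" by (rule DERIV_isCont)
    qed
    then show "continuous_on {0..x} f" by (rule continuous_at_imp_continuous_on)
  qed
  then show ?case using f0 unfolding f_def by simp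
qed

lemma Li_bound:
  assumes "ms \<noteq> []" "\<forall>m\<in>set ms. 1 \<le> m" "norm z < 1"
  shows "norm (Li ms z) \<le> (- ln (1 - norm z))^(length ms) / fact (length ms)"
proof -
  define x where "x = norm z"
  have x: "0 \<le> x" "x < 1" using assms by (auto simp: x_def)
  define c where "c n = mpl_coef ms n * x^n" for n
  have cnn: "0 \<le> c n" for n using x by (auto simp: c_def intro!: mult_nonneg_nonneg mpl_coef_nonneg)
  have ps: "(\<Sum>n<N. c n) \<le> (- ln (1 - x))^(length ms) / fact (length ms)" for N
  proof -
    have "(\<Sum>n<N. c n) \<le> (\<Sum>n\<le>N. c n)" using cnn by (intro sum_mono2) auto
    also have "\<dots> \<le> (\<Sum>n\<le>N. cc (length ms) n * x^n)"
      unfolding c_def using x mpl_le_cc[OF assms(1,2)] by (intro sum_mono mult_right_mono) auto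
    also have "\<dots> \<le> (- ln (1 - x))^(length ms) / fact (length ms)" by (rule P_le[OF x])
    finally show ?thesis .
  qed
  have sc: "summable c" by (rule summableI_nonneg_bounded[OF cnn ps])
  have "norm (Li ms z) \<le> suminf c"
    unfolding Li_def
    by (rule norm_suminf_le[OF _ sc]) (simp add: c_def x_def norm_mult norm_power abs_of_nonneg mpl_coef_nonneg)
  also have "\<dots> \<le> (- ln (1 - x))^(length ms) / fact (length ms)"
    by (rule suminf_le_const[OF sc ps])
  finally show ?thesis by (simp add: x_def)
qed

lemma L_scale:
  fixes x a :: real
  assumes "0 \<le> x" "x \<le> a" "a < 1" "0 < a" "1 \<le> j"
  shows "(- ln (1 - x))^j \<le> (- ln (1 - a))^j * x / a"
proof -
  define t where "t = x / a"
  have t: "0 \<le> t" "t \<le> 1" using assms by (auto simp: t_def)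
  have c: "(1 - t) * ln 1 + t * ln (1 - a) \<le> ln ((1 - t) *\<^sub>R 1 + t *\<^sub>R (1 - a))"
    by (rule concave_onD[OF ln_concave]) (use t assms in auto)
  have e: "(1 - t) *\<^sub>R 1 + t *\<^sub>R (1 - a) = 1 - x" using assms by (simp add: t_def field_simps)
  have l1: "- ln (1 - x) \<le> t * (- ln (1 - a))" using c unfolding e by simp
  have l0: "0 \<le> - ln (1 - x)" using assms by simp
  have "(- ln (1 - x))^j \<le> (t * (- ln (1 - a)))^j" by (rule power_mono[OF l1 l0])
  also have "\<dots> = t^j * (- ln (1 - a))^j" by (rule power_mult_distrib)
  also have "\<dots> \<le> t * (- ln (1 - a))^j"
  proof (rule mult_right_mono)
    show "t^j \<le> t" using t assms(5) by (metis power_decreasing power_one_right)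
    show "0 \<le> (- ln (1 - a))^j" using assms by simp
  qed
  finally show ?thesis by (simp add: t_def mult.commute)
qed



lemma tri: "norm (a::complex) \<le> A \<Longrightarrow> norm b \<le> B \<Longrightarrow> norm (a + b) \<le> A + B"
  by (rule order_trans[OF norm_triangle_ineq add_mono])

lemma ofr_bound: "norm (w::complex) \<le> B \<Longrightarrow> norm (of_real c * w) \<le> \<bar>c\<bar> * B"
  by (simp add: norm_mult mult_left_mono)

lemma num_bound: "norm (w::complex) \<le> B \<Longrightarrow> norm (numeral k * w) \<le> numeral k * B"
  by (simp add: norm_mult mult_left_mono)

lemma CV_nonneg: "0 \<le> CV l j"
  by (simp add: CV_def)

lemma part1:
  fixes l :: nat and z :: complex
  assumes "l \<in> {1..4}" and "norm z < 1"
  shows "norm (V l z) \<le> (\<Sum>j=1..l. CV l j * (- ln (1 - norm z))^j / fact j)"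
proof -
  define G where "G k = (- ln (1 - norm z))^k / fact k" for k :: nat
  have LB: "norm (Li ms z) \<le> G (length ms)" if "ms \<noteq> []" "\<forall>m\<in>set ms. 1 \<le> m" for ms
    using Li_bound[OF that assms(2)] by (simp add: G_def)
  have b1: "norm (Li [1] z) \<le> G 1" using LB[of "[1]"] by (simp add: numeral_eq_Suc)
  have b2: "norm (Li [2] z) \<le> G 1" using LB[of "[2]"] by (simp add: numeral_eq_Suc)
  have b3: "norm (Li [3] z) \<le> G 1" using LB[of "[3]"] by (simp add: numeral_eq_Suc)
  have b4: "norm (Li [4] z) \<le> G 1" using LB[of "[4]"] by (simp add: numeral_eq_Suc)
  have b11: "norm (Li [1,1] z) \<le> G 2" using LB[of "[1,1]"] by (simp add: numeral_eq_Suc)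
  have b12: "norm (Li [1,2] z) \<le> G 2" using LB[of "[1,2]"] by (simp add: numeral_eq_Suc)
  have b21: "norm (Li [2,1] z) \<le> G 2" using LB[of "[2,1]"] by (simp add: numeral_eq_Suc)
  have b31: "norm (Li [3,1] z) \<le> G 2" using LB[of "[3,1]"] by (simp add: numeral_eq_Suc)
  have b22: "norm (Li [2,2] z) \<le> G 2" using LB[of "[2,2]"] by (simp add: numeral_eq_Suc)
  have b13: "norm (Li [1,3] z) \<le> G 2" using LB[of "[1,3]"] by (simp add: numeral_eq_Suc)
  have b111: "norm (Li [1,1,1] z) \<le> G 3" using LB[of "[1,1,1]"] by (simp add: numeral_eq_Suc)
  have b211: "norm (Li [2,1,1] z) \<le> G 3" using LB[of "[2,1,1]"] by (simp add: numeral_eq_Suc)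
  have b121: "norm (Li [1,2,1] z) \<le> G 3" using LB[of "[1,2,1]"] by (simp add: numeral_eq_Suc)
  have b112: "norm (Li [1,1,2] z) \<le> G 3" using LB[of "[1,1,2]"] by (simp add: numeral_eq_Suc)
  have b1111: "norm (Li [1,1,1,1] z) \<le> G 4" using LB[of "[1,1,1,1]"] by (simp add: numeral_eq_Suc)
  have rhs: "(\<Sum>j=1..l. CV l j * (- ln (1 - norm z))^j / fact j) = (\<Sum>j=1..l. CV l j * G j)"
    by (simp add: G_def)
  have e2: "(\<Sum>j=1..2. CV 2 j * G j) = CV 2 1 * G 1 + CV 2 2 * G 2"
    by (simp add: numeral_2_eq_2)
  have e3: "(\<Sum>j=1..3. CV 3 j * G j) = CV 3 1 * G 1 + CV 3 2 * G 2 + CV 3 3 * G 3"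
  proof -
    have "{1..3::nat} = {1,2,3}" by auto
    then show ?thesis by simp
  qed
  have e4: "(\<Sum>j=1..4. CV 4 j * G j) = CV 4 1 * G 1 + CV 4 2 * G 2 + CV 4 3 * G 3 + CV 4 4 * G 4"
  proof -
    have "{1..4::nat} = {1,2,3,4}" by auto
    then show ?thesis by simp
  qed
  have s1: "{1..1::nat} = {1}" by auto
  have s2: "{1..2::nat} = {1,2}" by auto
  have s3: "{1..3::nat} = {1,2,3}" by auto
  have s4: "{1..4::nat} = {1,2,3,4}" by auto
  have neq: "(2::nat) \<noteq> 1" "(3::nat) \<noteq> 1" "(3::nat) \<noteq> 2" "(4::nat) \<noteq> 1" "(4::nat) \<noteq> 2" "(4::nat) \<noteq> 3"
    by auto
  consider "l = 1" | "l = 2" | "l = 3" | "l = 4" using assms(1) by force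
  then show ?thesis
  proof cases
    case 1
    have "norm (V l z) \<le> 2 * G 1" unfolding 1 V_def using num_bound[OF b1] by simp
    then show ?thesis unfolding rhs 1 s1 by (simp add: CV_def G_def)
  next
    case 2
    have "V l z = of_real (lam/2 - 2) * Li [2] z + 4 * Li [1,1] z" unfolding 2 V_def by (simp only: neq if_False if_True simp_thms)
    also have "norm \<dots> \<le> \<bar>lam/2 - 2\<bar> * G 1 + 4 * G 2"
      by (intro tri ofr_bound num_bound b2 b11)
    finally have "norm (V l z) \<le> \<bar>lam/2 - 2\<bar> * G 1 + 4 * G 2" .
    moreover have "CV 2 1 = \<bar>lam/2 - 2\<bar>" "CV 2 2 = 4" by (simp_all add: CV_def)
    ultimately show ?thesis unfolding rhs unfolding 2 e2 by simp
  next
    case 3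
    have "V l z = of_real (lam^2/16 - lam + 2) * Li [3] z + of_real (3*lam - 12) * Li [1,2] z
                     + of_real (lam - 4) * Li [2,1] z + 8 * Li [1,1,1] z" unfolding 3 V_def by (simp only: neq if_False if_True simp_thms)
    also have "norm \<dots> \<le> \<bar>lam^2/16 - lam + 2\<bar> * G 1 + \<bar>3*lam - 12\<bar> * G 2 + \<bar>lam - 4\<bar> * G 2 + 8 * G 3"
      by (intro tri ofr_bound num_bound b3 b12 b21 b111)
    finally have "norm (V l z) \<le> \<bar>lam^2/16 - lam + 2\<bar> * G 1 + \<bar>3*lam - 12\<bar> * G 2 + \<bar>lam - 4\<bar> * G 2 + 8 * G 3" .
    moreover have "CV 3 1 = \<bar>lam^2/16 - lam + 2\<bar>" "CV 3 2 = \<bar>3*lam - 12\<bar> + \<bar>lam - 4\<bar>" "CV 3 3 = 8"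
      by (simp_all add: CV_def)
    ultimately show ?thesis unfolding rhs unfolding 3 e3 by (simp add: distrib_right)
  next
    case 4
    have Veq: "V 4 z = of_real (lam^3/192 - lam^2/8 - lam/2 - 2) * Li [4] z
                     + of_real (lam^2/8 - 2*lam + 4) * Li [3,1] z
                     + of_real (lam^2/4 - 4*lam + 12) * Li [2,2] z
                     + of_real (5*lam^2/8 - 8*lam + 28) * Li [1,3] z
                     + of_real (2*lam - 8) * Li [2,1,1] z
                     + of_real (6*lam - 24) * Li [1,2,1] z
                     + of_real (14*lam - 56) * Li [1,1,2] z
                     + 16 * Li [1,1,1,1] z
                     + of_real (2*lam*zeta3) * Li [1] z" unfolding V_def by (simp only: neq if_False if_True simp_thms)
    have "norm (V l z) \<le> \<bar>lam^3/192 - lam^2/8 - lam/2 - 2\<bar> * G 1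
                     + \<bar>lam^2/8 - 2*lam + 4\<bar> * G 2
                     + \<bar>lam^2/4 - 4*lam + 12\<bar> * G 2
                     + \<bar>5*lam^2/8 - 8*lam + 28\<bar> * G 2
                     + \<bar>2*lam - 8\<bar> * G 3
                     + \<bar>6*lam - 24\<bar> * G 3
                     + \<bar>14*lam - 56\<bar> * G 3
                     + 16 * G 4
                     + \<bar>2*lam*zeta3\<bar> * G 1"
      unfolding 4 Veq
      by (rule tri[OF tri[OF tri[OF tri[OF tri[OF tri[OF tri[OF tri[OF ofr_bound[OF b4] ofr_bound[OF b31]] ofr_bound[OF b22]] ofr_bound[OF b13]] ofr_bound[OF b211]] ofr_bound[OF b121]] ofr_bound[OF b112]] num_bound[OF b1111]] ofr_bound[OF b1]])
    moreover have "CV 4 1 = \<bar>lam^3/192 - lam^2/8 - lam/2 - 2\<bar> + \<bar>2*lam*zeta3\<bar>"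
      "CV 4 2 = \<bar>lam^2/8 - 2*lam + 4\<bar> + \<bar>lam^2/4 - 4*lam + 12\<bar> + \<bar>5*lam^2/8 - 8*lam + 28\<bar>"
      "CV 4 3 = \<bar>2*lam - 8\<bar> + \<bar>6*lam - 24\<bar> + \<bar>14*lam - 56\<bar>" "CV 4 4 = 16"
      by (simp_all add: CV_def)
    ultimately show ?thesis unfolding rhs unfolding 4 e4 by (simp add: distrib_right)
  qed
qed

theorem lemmaA2:
  fixes l :: nat and z :: complex
  assumes "l \<in> {1..4}" and "norm z < 1"
  shows "norm (V l z) \<le> (\<Sum>j=1..l. CV l j * \<bar>ln (1 - norm z)\<bar>^j / fact j) \<and>
         (\<forall>a::real. 0 < a \<and> a < 1 \<and> norm z \<le> a \<longrightarrow> norm (V l z) \<le> D l a * norm z)"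
proof -
  have absx: "\<bar>ln (1 - norm z)\<bar> = - ln (1 - norm z)" using assms(2) by simp
  have P1: "norm (V l z) \<le> (\<Sum>j=1..l. CV l j * \<bar>ln (1 - norm z)\<bar>^j / fact j)"
    unfolding absx by (rule part1[OF assms])
  have P2: "norm (V l z) \<le> D l a * norm z" if a: "0 < a" "a < 1" "norm z \<le> a" for a
  proof -
    have absa: "\<bar>ln (1 - a)\<bar> = - ln (1 - a)" using a by simp
    have "(\<Sum>j=1..l. CV l j * (- ln (1 - norm z))^j / fact j)
        \<le> (\<Sum>j=1..l. CV l j * \<bar>ln (1 - a)\<bar>^j / (a * fact j) * norm z)"
    proof (rule sum_mono)
      fix j assume j: "j \<in> {1..l}"
      have "(- ln (1 - norm z))^j \<le> (- ln (1 - a))^j * norm z / a"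
        using j a by (intro L_scale) auto
      then have "CV l j * (- ln (1 - norm z))^j / fact j \<le> CV l j * ((- ln (1 - a))^j * norm z / a) / fact j"
        by (intro divide_right_mono mult_left_mono CV_nonneg) auto
      also have "\<dots> = CV l j * \<bar>ln (1 - a)\<bar>^j / (a * fact j) * norm z"
        unfolding absa by (simp add: field_simps)
      finally show "CV l j * (- ln (1 - norm z))^j / fact j \<le> CV l j * \<bar>ln (1 - a)\<bar>^j / (a * fact j) * norm z" .
    qed
    also have "\<dots> = D l a * norm z" unfolding D_def by (simp add: sum_distrib_right)
    finally show ?thesis using part1[OF assms] by linarith
  qed
  show ?thesis using P1 P2 by blast
qed

end
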